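(* Let $\mathbb{X},\mathbb{Y}$ be finite-dimensional Banach spaces and let $T\in\mathbb{L}(\mathbb{X},\mathbb{Y})$ with $\|T\|=1$. Then $T$ is $k$-smooth if and only if its adjoint $T^*\in\mathbb{L}(\mathbb{Y}^*,\mathbb{X}^* )$ is $k$-smooth.
   Context: $\mathbb{L}(\mathbb{X},\mathbb{Y})$ is the space of linear operators with the operator norm. For a Banach space $\mathbb{Z}$ and a unit vector $z$, $J(z)=\{f\in \mathbb{Z}^*:\|f\|=1,\ f(z)=1\}$; $z$ is $k$-smooth if $\dim\operatorname{span} J(z)=k$. An operator of norm one is $k$-smooth if it is a $k$-smooth point of the unit sphere of the corresponding operator space. *)

theory Defs
  imports "HOL-Analysis.Analysis"
begin

definition supp_funcs :: "'z::real_normed_vector \<Rightarrow> ('z \<Rightarrow>\<^sub>L real) set" where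
  "supp_funcs z = {f. norm f = 1 \<and> blinfun_apply f z = 1}"

definition k_smooth :: "'z::real_normed_vector \<Rightarrow> nat \<Rightarrow> bool" where
  "k_smooth z k \<longleftrightarrow> norm z = 1 \<and> dim (span (supp_funcs z)) = k"

definition fin_dim_space :: "'a::real_vector itself \<Rightarrow> bool" where
  "fin_dim_space _ \<longleftrightarrow> (\<exists>B::'a set. finite B \<and> span B = UNIV)"

definition adjoint_op :: "('a::real_normed_vector \<Rightarrow>\<^sub>L 'b::real_normed_vector)
    \<Rightarrow> (('b \<Rightarrow>\<^sub>L real) \<Rightarrow>\<^sub>L ('a \<Rightarrow>\<^sub>L real))" where
  "adjoint_op T = Blinfun (\<lambda>g. g o\<^sub>L T)"

end

theory Submission
  imports Defs
begin


lemma hb_step: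
  fixes g :: "'b::real_normed_vector \<Rightarrow> real"
  assumes lg: "linear g" and sM: "subspace M" and gM: "\<forall>u\<in>M. g u \<le> norm u" and vM: "v \<notin> M"
  shows "\<exists>g'. linear g' \<and> (\<forall>u\<in>M. g' u = g u) \<and> (\<forall>u\<in>span (insert v M). g' u \<le> norm u)"
proof -
  have LU: "g m - norm (m - v) \<le> norm (m' + v) - g m'" if "m \<in> M" "m' \<in> M" for m m'
  proof -
    have "g m + g m' = g (m + m')" using lg by (simp add: linear_add)
    also have "\<dots> \<le> norm (m + m')" using gM sM that by (simp add: subspace_add)
    also have "\<dots> = norm ((m - v) + (m' + v))" by simp
    also have "\<dots> \<le> norm (m - v) + norm (m' + v)" by (rule norm_triangle_ineq)
    finally show ?thesis by simp
  qed
  define L where "L = (\<lambda>m. g m - norm (m - v)) ` M"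
  define c where "c = Sup L"
  have M0: "0 \<in> M" using sM by (simp add: subspace_0)
  have bdd: "bdd_above L" unfolding L_def bdd_above_def using LU M0 by blast
  have Lne: "L \<noteq> {}" using M0 L_def by blast
  have c1: "g m - norm (m - v) \<le> c" if "m \<in> M" for m
    unfolding c_def using that bdd by (intro cSup_upper) (auto simp: L_def)
  have c2: "c \<le> norm (m + v) - g m" if "m \<in> M" for m
    unfolding c_def using that Lne LU by (intro cSup_least) (auto simp: L_def)
  obtain B0 where B0: "B0 \<subseteq> M" "independent B0" "M \<subseteq> span B0"
    by (rule maximal_independent_subset[of M])
  have spB0: "span B0 = M" using span_minimal[OF B0(1) sM] B0(3) by (rule subset_antisym)
  have indv: "independent (insert v B0)"
    using independent_insertI[of v B0] vM spB0 B0(2) by simp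
  from linear_independent_extend[OF indv, of "\<lambda>x. if x = v then (1::real) else 0"]
  obtain h :: "'b \<Rightarrow> real" where h: "linear h" "\<forall>x\<in>insert v B0. h x = (if x = v then 1 else 0)"
    by (elim exE conjE) (rule that)
  have hB0: "h x = 0" if "x \<in> B0" for x
  proof -
    have "x \<noteq> v" using that B0(1) vM by blast
    then show ?thesis using h(2) that by simp
  qed
  have h0: "h u = 0" if uM: "u \<in> M" for u
    using linear_eq_0_on_span[OF h(1) hB0] uM spB0 by simp
  have hv: "h v = 1" using h by simp
  define g' where "g' = (\<lambda>x. g x + (c - g v) * h x)"
  have lg': "linear g'"
    unfolding g'_def using lg h(1)
    by (intro linearI) (simp_all add: linear_add linear_scale algebra_simps)
  have agree: "\<forall>u\<in>M. g' u = g u" using h0 by (simp add: g'_def)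
  have bound: "g' u \<le> norm u" if uvM: "u \<in> span (insert v M)" for u
  proof -
    obtain k where k: "u - k *\<^sub>R v \<in> span M" using uvM by (auto simp: span_insert)
    define m where "m = u - k *\<^sub>R v"
    have "span M = M" using sM by (simp add: span_eq_iff)
    then have mM: "m \<in> M" using k m_def by metis
    have u: "u = m + k *\<^sub>R v" by (simp add: m_def)
    have gu: "g' u = g m + k * c"
      using lg h(1) h0[OF mM] hv
      by (simp add: g'_def u linear_add linear_scale algebra_simps)
    consider "k = 0" | "k > 0" | "k < 0" by linarith
    then show ?thesis
    proof cases
      case 1 then show ?thesis using gu gM mM u by simp
    next
      case 2
      have mk: "(1/k) *\<^sub>R m \<in> M" using mM sM by (simp add: subspace_scale)
      have "c \<le> norm ((1/k) *\<^sub>R m + v) - g ((1/k) *\<^sub>R m)" by (rule c2[OF mk])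
      also have "(1/k) *\<^sub>R m + v = (1/k) *\<^sub>R (m + k *\<^sub>R v)" using 2 by (simp add: algebra_simps)
      finally have "c \<le> (1/k) * norm (m + k *\<^sub>R v) - (1/k) * g m"
        using 2 lg by (simp add: linear_scale)
      then have "k * c \<le> norm (m + k *\<^sub>R v) - g m" using 2
        by (simp add: field_simps)
      then show ?thesis using gu u by simp
    next
      case 3
      define s where "s = - k"
      have s: "s > 0" using 3 s_def by simp
      have mk: "(1/s) *\<^sub>R m \<in> M" using mM sM by (simp add: subspace_scale)
      have "g ((1/s) *\<^sub>R m) - norm ((1/s) *\<^sub>R m - v) \<le> c" by (rule c1[OF mk])
      also have "(1/s) *\<^sub>R m - v = (1/s) *\<^sub>R (m + k *\<^sub>R v)" using s by (simp add: s_def algebra_simps)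
      finally have "(1/s) * g m - (1/s) * norm (m + k *\<^sub>R v) \<le> c"
        using s lg by (simp add: linear_scale)
      then have "g m - norm (m + k *\<^sub>R v) \<le> s * c" using s
        by (simp add: field_simps)
      then show ?thesis using gu u s_def by simp
    qed
  qed
  show ?thesis using lg' agree bound by blast
qed

lemma hb_fin:
  fixes y :: "'b::real_normed_vector"
  assumes "finite S" "y \<noteq> 0"
  shows "\<exists>g. linear g \<and> g y = norm y \<and> (\<forall>u\<in>span (insert y S). g u \<le> norm u)"
  using assms(1)
proof (induction S rule: finite_induct)
  case empty
  have ind: "independent {y}" using assms(2) by simp
  from linear_independent_extend[OF ind, of "\<lambda>x. norm y"]
  obtain g :: "'b \<Rightarrow> real" where g: "linear g" "\<forall>x\<in>{y}. g x = norm y"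
    by (elim exE conjE) (rule that)
  have "g u \<le> norm u" if uy: "u \<in> span {y}" for u
  proof -
    obtain t where "u = t *\<^sub>R y" using uy by (auto simp: span_singleton)
    then show ?thesis using g by (simp add: linear_scale mult_right_mono)
  qed
  then show ?case using g by auto
next
  case (insert v S)
  then obtain g where g: "linear g" "g y = norm y" "\<forall>u\<in>span (insert y S). g u \<le> norm u" by blast
  show ?case
  proof (cases "v \<in> span (insert y S)")
    case True
    have "span (insert y (insert v S)) = span (insert v (insert y S))" by (simp add: insert_commute)
    also have "\<dots> = span (insert y S)" using True by (rule span_redundant)
    finally show ?thesis using g by auto
  next
    case False
    obtain g' where g': "linear g'" "\<forall>u\<in>span (insert y S). g' u = g u"
      "\<forall>u\<in>span (insert v (span (insert y S))). g' u \<le> norm u"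
      using hb_step[OF g(1) subspace_span g(3) False] by blast
    have "span (insert y (insert v S)) \<subseteq> span (insert v (span (insert y S)))"
      by (intro span_mono) (auto intro: span_base)
    moreover have "g' y = norm y" using g'(2) g(2) span_base[of y "insert y S"] by simp
    ultimately show ?thesis using g' by blast
  qed
qed




lemma hb:
  fixes y :: "'b::real_normed_vector"
  assumes "fin_dim_space TYPE('b)"
  shows "\<exists>g::'b \<Rightarrow>\<^sub>L real. norm g \<le> 1 \<and> blinfun_apply g y = norm y"
proof (cases "y = 0")
  case True
  then show ?thesis by (intro exI[of _ 0]) simp
next
  case False
  obtain B :: "'b set" where B: "finite B" "span B = UNIV"
    using assms unfolding fin_dim_space_def by blast
  obtain g where g: "linear g" "g y = norm y" "\<forall>u\<in>span (insert y B). g u \<le> norm u"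
    using hb_fin[OF B(1) False] by blast
  have sp: "span (insert y B) = UNIV"
    using B(2) span_mono[of B "insert y B"] by auto
  have le: "g u \<le> norm u" for u using g(3) sp by auto
  have ab: "norm (g u) \<le> norm u * 1" for u
  proof -
    have "- g u = g (- u)" using g(1) by (simp add: linear_neg)
    also have "\<dots> \<le> norm u" using le[of "- u"] by simp
    finally show ?thesis using le[of u] by simp
  qed
  have bl: "bounded_linear g"
    using g(1) ab by (intro bounded_linear_intro[of g 1]) (simp_all add: linear_add linear_scale)
  have "norm (Blinfun g) \<le> 1"
    using ab by (intro norm_blinfun_bound) (simp_all add: bounded_linear_Blinfun_apply[OF bl])
  then show ?thesis using g(2) bl by (intro exI[of _ "Blinfun g"]) (simp add: bounded_linear_Blinfun_apply)
qed

lemma sep_points: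
  fixes y1 y2 :: "'b::real_normed_vector"
  assumes "fin_dim_space TYPE('b)" "\<And>g::'b \<Rightarrow>\<^sub>L real. blinfun_apply g y1 = blinfun_apply g y2"
  shows "y1 = y2"
proof -
  obtain g :: "'b \<Rightarrow>\<^sub>L real" where "blinfun_apply g (y1 - y2) = norm (y1 - y2)"
    using hb[OF assms(1)] by blast
  then have "norm (y1 - y2) = 0" using assms(2)[of g] by (simp add: blinfun.diff_right)
  then show ?thesis by simp
qed

lemma adj_apply:
  fixes T :: "'a::real_normed_vector \<Rightarrow>\<^sub>L 'b::real_normed_vector"
  shows "blinfun_apply (adjoint_op T) g = g o\<^sub>L T"
proof -
  have "bounded_linear (\<lambda>g::'b \<Rightarrow>\<^sub>L real. g o\<^sub>L T)"
    by (rule bounded_bilinear.bounded_linear_left[OF bounded_bilinear_blinfun_compose])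
  then show ?thesis unfolding adjoint_op_def by (simp add: bounded_linear_Blinfun_apply)
qed

lemma norm_adj:
  fixes T :: "'a::real_normed_vector \<Rightarrow>\<^sub>L 'b::real_normed_vector"
  assumes "fin_dim_space TYPE('b)"
  shows "norm (adjoint_op T) = norm T"
proof (rule antisym)
  show "norm (adjoint_op T) \<le> norm T"
  proof (rule norm_blinfun_bound)
    fix g :: "'b \<Rightarrow>\<^sub>L real"
    show "norm (blinfun_apply (adjoint_op T) g) \<le> norm T * norm g"
      using norm_blinfun_compose[of g T] by (simp add: adj_apply mult.commute)
  qed simp
  show "norm T \<le> norm (adjoint_op T)"
  proof (rule norm_blinfun_bound)
    fix x
    obtain g :: "'b \<Rightarrow>\<^sub>L real" where g: "norm g \<le> 1" "blinfun_apply g (blinfun_apply T x) = norm (blinfun_apply T x)"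
      using hb[OF assms] by blast
    have "norm (blinfun_apply T x) = blinfun_apply (g o\<^sub>L T) x" using g(2) by simp
    also have "\<dots> \<le> norm (g o\<^sub>L T) * norm x"
      using norm_blinfun[of "g o\<^sub>L T" x] by simp
    also have "norm (g o\<^sub>L T) \<le> norm (adjoint_op T)"
    proof -
      have "norm (g o\<^sub>L T) = norm (blinfun_apply (adjoint_op T) g)" by (simp add: adj_apply)
      also have "\<dots> \<le> norm (adjoint_op T) * norm g" by (rule norm_blinfun)
      also have "\<dots> \<le> norm (adjoint_op T) * 1" using g(1) by (intro mult_left_mono) simp_all
      finally show ?thesis by simp
    qed
    then have "norm (g o\<^sub>L T) * norm x \<le> norm (adjoint_op T) * norm x"
      by (intro mult_right_mono) simp_all
    finally show "norm (blinfun_apply T x) \<le> norm (adjoint_op T) * norm x" .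
  qed simp
qed

lemma adj_add: "adjoint_op (S + T) = adjoint_op S + adjoint_op T"
  by (intro blinfun_eqI) (simp add: adj_apply blinfun.add_left blinfun.add_right)

lemma adj_scale: "adjoint_op (r *\<^sub>R T) = r *\<^sub>R adjoint_op T"
  by (intro blinfun_eqI) (simp add: adj_apply blinfun.scaleR_left blinfun.scaleR_right)

lemma dim_inj_image:
  fixes f :: "'u::real_vector \<Rightarrow> 'v::real_vector"
  assumes "linear f" "inj f"
  shows "dim (f ` S) = dim S"
proof -
  obtain B where B: "B \<subseteq> S" "independent B" "S \<subseteq> span B" "card B = dim S"
    by (rule basis_exists)
  have "independent (f ` B)"
    using linear_independent_injective_image[OF assms(1) B(2)] assms(2) by (simp add: inj_on_def)
  moreover have "f ` S \<subseteq> span (f ` B)" using linear_spans_image[OF assms(1) B(3)] .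
  moreover have "f ` B \<subseteq> f ` S" using B(1) by blast
  ultimately have "card (f ` B) = dim (f ` S)" by (intro basis_card_eq_dim)
  moreover have "card (f ` B) = card B" using assms(2) by (simp add: card_image inj_on_subset)
  ultimately show ?thesis using B(4) by simp
qed




lemma fd_basis:
  assumes "fin_dim_space TYPE('b::real_vector)"
  shows "\<exists>B::'b set. finite B \<and> independent B \<and> span B = UNIV"
proof -
  obtain W :: "'b set" where W: "finite W" "span W = UNIV"
    using assms unfolding fin_dim_space_def by blast
  obtain B where B: "B \<subseteq> W" "independent B" "W \<subseteq> span B"
    by (rule maximal_independent_subset[of W])
  have "span W \<subseteq> span B" using span_mono[OF B(3)] by (simp only: span_span)
  then have spB: "span B = UNIV" using W(2) by auto
  have fB: "finite B" using B(1) W(1) by (rule finite_subset)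
  show ?thesis using fB B(2) spB by blast
qed

lemma fin_inj:
  fixes f :: "'u::real_vector \<Rightarrow> 'v::real_vector" and W :: "'v set"
  assumes "linear f" "inj f" "finite W" "span W = UNIV"
  shows "\<exists>C::'u set. finite C \<and> span C = UNIV \<and> card C \<le> card W"
proof -
  obtain C :: "'u set" where C0: "C \<subseteq> UNIV" and C: "independent C" "UNIV \<subseteq> span C"
    by (rule maximal_independent_subset[of "UNIV :: 'u set"])
  have iC: "inj_on f C" using inj_on_subset[OF assms(2) subset_UNIV] .
  have ind: "independent (f ` C)"
    using linear_independent_injective_image[OF assms(1) C(1) inj_on_subset[OF assms(2) subset_UNIV]] .
  have sub: "f ` C \<subseteq> span W" using assms(4) by simp
  have fc: "finite (f ` C) \<and> card (f ` C) \<le> card W"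
    by (rule independent_span_bound[OF assms(3) ind sub])
  have finC: "finite C" using finite_imageD[OF conjunct1[OF fc] iC] .
  have cc: "card (f ` C) = card C" using card_image[OF iC] .
  have spC: "span C = UNIV" using C(2) by (rule top_unique[THEN iffD1])
  have "card C \<le> card W" using fc cc by simp
  then show ?thesis using finC spC by blast
qed

lemma dual_fin:
  fixes W :: "'v::real_normed_vector set"
  assumes "finite W" "span W = UNIV"
  shows "\<exists>C::('v \<Rightarrow>\<^sub>L real) set. finite C \<and> span C = UNIV \<and> card C \<le> card W"
proof -
  obtain B where B: "B \<subseteq> W" "independent B" "W \<subseteq> span B"
    by (rule maximal_independent_subset[of W])
  have spB: "span B = UNIV" using B(3) assms(2) by (metis span_mono span_span top.extremum_unique)
  have fB: "finite B" using B(1) assms(1) finite_subset by blast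
  have cB: "card B \<le> card W" using B(1) assms(1) card_mono by blast
  define J where "J = (\<lambda>g::'v \<Rightarrow>\<^sub>L real. \<Sum>b\<in>B. blinfun_apply g b *\<^sub>R b)"
  have lJ: "linear J"
    unfolding J_def
    by (intro linearI) (simp_all add: blinfun.add_left blinfun.scaleR_left scaleR_add_left
        sum.distrib scaleR_sum_right)
  have iJ: "inj J"
  proof (rule injI)
    fix g1 g2 assume eq: "J g1 = J g2"
    have "(\<Sum>b\<in>B. blinfun_apply (g1 - g2) b *\<^sub>R b) = 0"
      using eq unfolding J_def
      by (simp add: blinfun.diff_left scaleR_diff_left sum_subtractf)
    then have z: "\<forall>b\<in>B. blinfun_apply (g1 - g2) b = 0"
      using B(2) fB unfolding independent_explicit_finite_subsets by blast
    have "blinfun_apply (g1 - g2) x = 0" for x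
      using linear_eq_0_on_span[OF bounded_linear.linear[OF blinfun.bounded_linear_right], of B "g1 - g2" x] z spB
      by simp
    then have "g1 - g2 = 0" by (intro blinfun_eqI) simp
    then show "g1 = g2" by simp
  qed
  obtain C :: "('v \<Rightarrow>\<^sub>L real) set" where "finite C" "span C = UNIV" "card C \<le> card B"
    using fin_inj[OF lJ iJ fB spB] by blast
  then show ?thesis using cB by (intro exI[of _ C]) simp
qed

lemma iota_surj:
  fixes F :: "('b::real_normed_vector \<Rightarrow>\<^sub>L real) \<Rightarrow>\<^sub>L real"
  assumes fd: "fin_dim_space TYPE('b)"
  shows "\<exists>y. \<forall>g. blinfun_apply F g = blinfun_apply g y"
proof -
  define \<iota> where "\<iota> = (\<lambda>y::'b. Blinfun (\<lambda>g::'b \<Rightarrow>\<^sub>L real. blinfun_apply g y))"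
  have ap: "blinfun_apply (\<iota> y) g = blinfun_apply g y" for y g
    unfolding \<iota>_def by (simp add: bounded_linear_Blinfun_apply[OF blinfun.bounded_linear_left])
  have li: "linear \<iota>"
    by (intro linearI; rule blinfun_eqI) (simp_all add: ap blinfun.add_left blinfun.scaleR_left blinfun.add_right blinfun.scaleR_right)
  have ii: "inj \<iota>"
  proof (rule injI)
    fix y1 y2 assume "\<iota> y1 = \<iota> y2"
    then have "blinfun_apply g y1 = blinfun_apply g y2" for g :: "'b \<Rightarrow>\<^sub>L real"
      by (metis ap)
    then show "y1 = y2" using sep_points[OF fd] by blast
  qed
  obtain B :: "'b set" where B: "finite B" "independent B" "span B = UNIV"
    using fd_basis[OF fd] by blast
  obtain C :: "('b \<Rightarrow>\<^sub>L real) set" where C: "finite C" "span C = UNIV" "card C \<le> card B"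
    using dual_fin[OF B(1) B(3)] by blast
  obtain D :: "(('b \<Rightarrow>\<^sub>L real) \<Rightarrow>\<^sub>L real) set" where D: "finite D" "span D = UNIV" "card D \<le> card C"
    using dual_fin[OF C(1) C(2)] by blast
  have rng: "range \<iota> = span (\<iota> ` B)" using linear_span_image[OF li, of B] B(3) by simp
  show ?thesis
  proof (rule ccontr)
    assume "\<not> ?thesis"
    note nex = this
    have nF: "F \<notin> range \<iota>"
    proof
      assume "F \<in> range \<iota>"
      then obtain y where "F = \<iota> y" by blast
      then have "\<forall>g. blinfun_apply F g = blinfun_apply g y" using ap by simp
      then show False using nex by blast
    qed
    have indB: "independent (\<iota> ` B)"
      using linear_independent_injective_image[OF li B(2)] ii by (simp add: inj_on_def)
    have ind: "independent (insert F (\<iota> ` B))"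
      using nF rng indB by (intro independent_insertI) auto
    have "finite (insert F (\<iota> ` B)) \<and> card (insert F (\<iota> ` B)) \<le> card D"
      using independent_span_bound[OF D(1) ind] D(2) by simp
    moreover have "card (insert F (\<iota> ` B)) = card B + 1"
    proof -
      have "F \<notin> \<iota> ` B" using nF by blast
      then have "card (insert F (\<iota> ` B)) = Suc (card (\<iota> ` B))" using B(1) by simp
      moreover have "card (\<iota> ` B) = card B" using ii by (simp add: card_image inj_on_subset)
      ultimately show ?thesis by simp
    qed
    ultimately show False using C(3) D(3) by simp
  qed
qed

lemma adj_surj:
  fixes S :: "('b::real_normed_vector \<Rightarrow>\<^sub>L real) \<Rightarrow>\<^sub>L ('a::real_normed_vector \<Rightarrow>\<^sub>L real)"
  assumes fd: "fin_dim_space TYPE('b)"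
  shows "\<exists>T. adjoint_op T = S"
proof -
  have ex: "\<exists>y. \<forall>g. blinfun_apply (blinfun_apply S g) x = blinfun_apply g y" for x
  proof -
    have bl: "bounded_linear (\<lambda>g. blinfun_apply (blinfun_apply S g) x)"
      by (intro bounded_linear_intros(16) blinfun.bounded_linear_right)
    obtain y where "\<forall>g. blinfun_apply (Blinfun (\<lambda>g. blinfun_apply (blinfun_apply S g) x)) g = blinfun_apply g y"
      using iota_surj[OF fd] by blast
    then show ?thesis using bounded_linear_Blinfun_apply[OF bl] by auto
  qed
  define Tf where "Tf = (\<lambda>x. SOME y. \<forall>g. blinfun_apply (blinfun_apply S g) x = blinfun_apply g y)"
  have P: "blinfun_apply g (Tf x) = blinfun_apply (blinfun_apply S g) x" for g x
    using someI_ex[OF ex[of x]] unfolding Tf_def by metis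
  have add: "Tf (x1 + x2) = Tf x1 + Tf x2" for x1 x2
    by (rule sep_points[OF fd]) (simp add: P blinfun.add_right)
  have scl: "Tf (r *\<^sub>R x) = r *\<^sub>R Tf x" for r x
    by (rule sep_points[OF fd]) (simp add: P blinfun.scaleR_right)
  have bnd: "norm (Tf x) \<le> norm x * norm S" for x
  proof -
    obtain g :: "'b \<Rightarrow>\<^sub>L real" where g: "norm g \<le> 1" "blinfun_apply g (Tf x) = norm (Tf x)"
      using hb[OF fd] by blast
    have "norm (Tf x) = blinfun_apply (blinfun_apply S g) x" using g(2) P by simp
    also have "\<dots> \<le> norm (blinfun_apply (blinfun_apply S g) x)" by simp
    also have "\<dots> \<le> norm (blinfun_apply S g) * norm x" by (rule norm_blinfun)
    also have "\<dots> \<le> (norm S * norm g) * norm x" by (intro mult_right_mono norm_blinfun) simp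
    also have "\<dots> \<le> (norm S * 1) * norm x" using g(1) by (intro mult_right_mono mult_left_mono) simp_all
    finally show ?thesis by (simp add: mult.commute)
  qed
  have bl: "bounded_linear Tf" using add scl bnd by (intro bounded_linear_intro) auto
  have "adjoint_op (Blinfun Tf) = S"
    by (intro blinfun_eqI) (simp add: adj_apply blinfun_eqI bounded_linear_Blinfun_apply[OF bl] P)
  then show ?thesis by blast
qed




theorem proposition3p7:
  fixes T :: "'a::banach \<Rightarrow>\<^sub>L 'b::banach" and k :: nat
  assumes "fin_dim_space TYPE('a)" and "fin_dim_space TYPE('b)"
    and "norm T = 1"
  shows "k_smooth T k \<longleftrightarrow> k_smooth (adjoint_op T) k"
proof -
  note fd = assms(2)
  have nP: "norm (adjoint_op S) = norm S" for S :: "'a \<Rightarrow>\<^sub>L 'b"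
    by (rule norm_adj[OF fd])
  have blP: "bounded_linear (adjoint_op :: ('a \<Rightarrow>\<^sub>L 'b) \<Rightarrow> _)"
    by (rule bounded_linear_intro[where K=1]) (simp_all add: adj_add adj_scale nP)
  have injP: "adjoint_op S1 = adjoint_op S2 \<Longrightarrow> S1 = S2" for S1 S2 :: "'a \<Rightarrow>\<^sub>L 'b"
  proof -
    assume "adjoint_op S1 = adjoint_op S2"
    then have "adjoint_op (S1 - S2) = 0"
      using adj_add[of S2 "S1 - S2"] by simp
    then have "norm (S1 - S2) = 0" using nP[of "S1 - S2"] by simp
    then show "S1 = S2" by simp
  qed
  define A where "A = (\<lambda>f::(('b \<Rightarrow>\<^sub>L real) \<Rightarrow>\<^sub>L ('a \<Rightarrow>\<^sub>L real)) \<Rightarrow>\<^sub>L real.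
     Blinfun (\<lambda>S::'a \<Rightarrow>\<^sub>L 'b. blinfun_apply f (adjoint_op S)))"
  have Aap: "blinfun_apply (A f) S = blinfun_apply f (adjoint_op S)" for f S
  proof -
    have "bounded_linear (\<lambda>S::'a \<Rightarrow>\<^sub>L 'b. blinfun_apply f (adjoint_op S))"
      by (rule bounded_linear_compose[OF blinfun.bounded_linear_right blP])
    then show ?thesis unfolding A_def by (simp add: bounded_linear_Blinfun_apply)
  qed
  have nA: "norm (A f) = norm f" for f
  proof (rule antisym)
    show "norm (A f) \<le> norm f"
    proof (rule norm_blinfun_bound)
      fix S :: "'a \<Rightarrow>\<^sub>L 'b"
      show "norm (blinfun_apply (A f) S) \<le> norm f * norm S"
        using norm_blinfun[of f "adjoint_op S"] by (simp add: Aap nP)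
    qed simp
    show "norm f \<le> norm (A f)"
    proof (rule norm_blinfun_bound)
      fix R :: "('b \<Rightarrow>\<^sub>L real) \<Rightarrow>\<^sub>L ('a \<Rightarrow>\<^sub>L real)"
      obtain S where S: "adjoint_op S = R" using adj_surj[OF fd] by blast
      have "norm (blinfun_apply (A f) S) \<le> norm (A f) * norm S" by (rule norm_blinfun)
      then show "norm (blinfun_apply f R) \<le> norm (A f) * norm R"
        using S nP[of S] by (simp add: Aap)
    qed simp
  qed
  have lA: "linear A"
    by (intro linearI; rule blinfun_eqI) (simp_all add: Aap blinfun.add_left blinfun.scaleR_left)
  have iA: "inj A"
  proof (rule injI)
    fix f1 f2 assume "A f1 = A f2"
    then have "A (f1 - f2) = 0" using linear_diff[OF lA, of f1 f2] by simp
    then have "norm (f1 - f2) = 0" using nA[of "f1 - f2"] by simp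
    then show "f1 = f2" by simp
  qed
  have sA: "\<exists>f. A f = g" for g
  proof -
    define Psi where "Psi = (\<lambda>R. SOME S::'a \<Rightarrow>\<^sub>L 'b. adjoint_op S = R)"
    have Psi: "adjoint_op (Psi R) = R" for R
      unfolding Psi_def using someI_ex[OF adj_surj[OF fd, of R]] .
    have blPsi: "bounded_linear Psi"
    proof (rule bounded_linear_intro[where K=1])
      fix R1 R2 show "Psi (R1 + R2) = Psi R1 + Psi R2"
        by (rule injP) (simp add: Psi adj_add)
    next
      fix r R show "Psi (r *\<^sub>R R) = r *\<^sub>R Psi R"
        by (rule injP) (simp add: Psi adj_scale)
    next
      fix R show "norm (Psi R) \<le> norm R * 1"
        using nP[of "Psi R"] by (simp add: Psi)
    qed
    have bl: "bounded_linear (\<lambda>R. blinfun_apply g (Psi R))"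
      by (rule bounded_linear_compose[OF blinfun.bounded_linear_right blPsi])
    have "A (Blinfun (\<lambda>R. blinfun_apply g (Psi R))) = g"
    proof (rule blinfun_eqI)
      fix S
      have "Psi (adjoint_op S) = S" by (rule injP) (simp add: Psi)
      then show "blinfun_apply (A (Blinfun (\<lambda>R. blinfun_apply g (Psi R)))) S = blinfun_apply g S"
        by (simp add: Aap bounded_linear_Blinfun_apply[OF bl])
    qed
    then show ?thesis by blast
  qed
  have img: "supp_funcs T = A ` supp_funcs (adjoint_op T)"
  proof
    show "A ` supp_funcs (adjoint_op T) \<subseteq> supp_funcs T"
      by (auto simp: supp_funcs_def nA Aap)
    show "supp_funcs T \<subseteq> A ` supp_funcs (adjoint_op T)"
    proof
      fix g assume g: "g \<in> supp_funcs T"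
      obtain f where f: "A f = g" using sA by blast
      have "f \<in> supp_funcs (adjoint_op T)"
        using g f nA[of f] Aap[of f T] by (auto simp: supp_funcs_def)
      then show "g \<in> A ` supp_funcs (adjoint_op T)" using f by blast
    qed
  qed
  have "dim (span (supp_funcs T)) = dim (span (supp_funcs (adjoint_op T)))"
    using dim_inj_image[OF lA iA] img by simp
  moreover have "norm (adjoint_op T) = norm T" by (rule nP)
  ultimately show ?thesis unfolding k_smooth_def by simp
qed


end
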